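(* Let $\alpha,\beta,\gamma\in\mathbb R$ with $\gamma>0$ and $\alpha\beta>0$. Then $z\mapsto F(\alpha,\beta;\gamma;z)-1$ is strictly increasing on $[0,1)$.
   Context: $F(\alpha,\beta;\gamma;z)=\sum_{n=0}^{\infty}\frac{(\alpha)_n(\beta)_n}{(\gamma)_n\,n!}z^n$ for $|z|<1$ is the Gauss hypergeometric function, where $(x)_n=x(x+1)\cdots(x+n-1)$ and $(x)_0=1$ (defined for $\gamma\notin\mathbb Z_{\le0}$). *)

theory Defs
  imports "HOL-Analysis.Analysis"
begin

text \<open>Gauss hypergeometric function F(a,b;c;z), defined by its power series
  (meaningful for |z| < 1 and c not a non-positive integer).\<close>
definition hyp2F1 :: "real \<Rightarrow> real \<Rightarrow> real \<Rightarrow> real \<Rightarrow> real" where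
  "hyp2F1 a b c z =
     (\<Sum>n. (pochhammer a n * pochhammer b n) / (pochhammer c n * fact n) * z ^ n)"

end

theory Submission
  imports Defs
begin

definition cf :: "real \<Rightarrow> real \<Rightarrow> real \<Rightarrow> nat \<Rightarrow> real" where
  "cf a b c n = (pochhammer a n * pochhammer b n) / (pochhammer c n * fact n)"

lemma hyp_cf: "hyp2F1 a b c z = (\<Sum>n. cf a b c n * z ^ n)"
  by (simp add: hyp2F1_def cf_def)

lemma cf_Suc: "cf a b c (Suc n) = cf a b c n * ((a + n) * (b + n) / ((c + n) * (n + 1)))"
  by (simp add: cf_def pochhammer_Suc fact_Suc field_simps)

lemma ratio_lim: "(\<lambda>n::nat. (a + real n) * (b + real n) / ((c + real n) * (real n + 1))) \<longlonglongrightarrow> 1"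
proof -
  have "(\<lambda>n::nat. (1 + a / real n) * (1 + b / real n) / ((1 + c / real n) * (1 + 1 / real n))) \<longlonglongrightarrow> (1 + 0) * (1 + 0) / ((1 + 0) * (1 + 0))"
    by (intro tendsto_intros lim_const_over_n) simp
  then have L: "(\<lambda>n::nat. (1 + a / real n) * (1 + b / real n) / ((1 + c / real n) * (1 + 1 / real n))) \<longlonglongrightarrow> 1" by simp
  have "eventually (\<lambda>n::nat. (1 + a / real n) * (1 + b / real n) / ((1 + c / real n) * (1 + 1 / real n)) = (a + real n) * (b + real n) / ((c + real n) * (real n + 1))) sequentially"
  proof (rule eventually_sequentiallyI[of 1])
    fix n :: nat assume "1 \<le> n"
    then have n: "real n \<noteq> 0" by simp
    have e1: "1 + a / real n = (a + real n) / real n" "1 + b / real n = (b + real n) / real n"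
      "1 + c / real n = (c + real n) / real n" "1 + 1 / real n = (real n + 1) / real n"
      using n by (simp_all add: field_simps)
    show "(1 + a / real n) * (1 + b / real n) / ((1 + c / real n) * (1 + 1 / real n)) = (a + real n) * (b + real n) / ((c + real n) * (real n + 1))"
      unfolding e1 using n by (simp add: divide_simps)
  qed
  from Lim_transform_eventually[OF L this] show ?thesis .
qed

lemma cf_summable:
  assumes "\<bar>z\<bar> < 1"
  shows "summable (\<lambda>n. cf a b c n * z ^ n)"
proof -
  define r where "r = (1 + \<bar>z\<bar>) / 2"
  have r1: "r < 1" and zr: "\<bar>z\<bar> < r" using assms by (auto simp: r_def)
  have "(\<lambda>n::nat. \<bar>(a + real n) * (b + real n) / ((c + real n) * (real n + 1))\<bar> * \<bar>z\<bar>) \<longlonglongrightarrow> \<bar>1\<bar> * \<bar>z\<bar>"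
    by (intro tendsto_intros ratio_lim)
  then have "eventually (\<lambda>n. \<bar>(a + real n) * (b + real n) / ((c + real n) * (real n + 1))\<bar> * \<bar>z\<bar> < r) sequentially"
    using zr by (intro order_tendstoD(2)) auto
  then obtain N where N: "\<And>n. n \<ge> N \<Longrightarrow> \<bar>(a + real n) * (b + real n) / ((c + real n) * (real n + 1))\<bar> * \<bar>z\<bar> < r"
    by (auto simp: eventually_sequentially)
  show ?thesis
  proof (rule summable_ratio_test[OF r1, of N])
    fix n assume "n \<ge> N"
    from N[OF this] have h: "\<bar>(a + real n) * (b + real n) / ((c + real n) * (real n + 1))\<bar> * \<bar>z\<bar> \<le> r" by simp
    define R where "R = (a + real n) * (b + real n) / ((c + real n) * (real n + 1))"
    have eq: "cf a b c (Suc n) * z ^ Suc n = (R * z) * (cf a b c n * z ^ n)"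
      by (simp add: cf_Suc R_def mult_ac)
    have "norm (cf a b c (Suc n) * z ^ Suc n) = (\<bar>(a + real n) * (b + real n) / ((c + real n) * (real n + 1))\<bar> * \<bar>z\<bar>) * norm (cf a b c n * z ^ n)"
      unfolding eq R_def real_norm_def abs_mult ..
    also have "\<dots> \<le> r * norm (cf a b c n * z ^ n)"
      by (rule mult_right_mono[OF h]) simp
    finally show "norm (cf a b c (Suc n) * z ^ Suc n) \<le> r * norm (cf a b c n * z ^ n)" .
  qed
qed

lemma poch_c1: "c \<noteq> 0 \<Longrightarrow> pochhammer (c + 1) n = pochhammer c n * (c + real n) / (c::real)"
  using pochhammer_rec[of c n] pochhammer_Suc[of c n] by (simp add: field_simps)

lemma poch_nonneg0: "(x::real) \<ge> 0 \<Longrightarrow> pochhammer x n \<ge> 0"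
  by (induction n) (auto simp: pochhammer_Suc)

lemma pos_base:
  assumes "a \<ge> 0" "b \<ge> 0" "c > 0" "0 \<le> z" "z < 1"
  shows "hyp2F1 a b c z > 0"
  unfolding hyp_cf
proof (rule suminf_pos2[of _ 0])
  show "summable (\<lambda>n. cf a b c n * z ^ n)" using assms by (intro cf_summable) auto
  show "0 \<le> cf a b c n * z ^ n" for n
  proof -
    have "0 \<le> pochhammer a n" "0 \<le> pochhammer b n" "0 < pochhammer c n" "0 < (fact n :: real)" "0 \<le> z ^ n"
      using assms by (auto intro: poch_nonneg0 pochhammer_pos)
    then show "0 \<le> cf a b c n * z ^ n" unfolding cf_def by simp
  qed
  show "0 < cf a b c 0 * z ^ 0" by (simp add: cf_def)
qed

lemma alg_rel:
  fixes A B C N b c p q r :: real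
  assumes "C \<noteq> 0" "c \<noteq> 0" "p \<noteq> 0" "N \<noteq> 0" "q \<noteq> 0"
  shows "A * r * (b * B) / (C * p * (q * N)) =
    A * r * (B * (b + q)) / (C * p * (q * N)) - A * B / (C * N)
    + (p - r) / c * (A * B / (C * p / c * N))"
  using assms by (simp add: field_simps)

lemma cf_rel:
  assumes "c > 0"
  shows "cf a b c (Suc n) = cf a (b+1) c (Suc n) - cf a (b+1) c n + (c - a) / c * cf a (b+1) (c+1) n"
proof -
  have p: "pochhammer c n > 0" using assms by (intro pochhammer_pos)
  have cn: "c + real n > 0" using assms by simp
  show ?thesis
    unfolding cf_def pochhammer_Suc[of a n] pochhammer_rec[of b n] pochhammer_Suc[of "b+1" n]
      pochhammer_Suc[of c n] poch_c1[OF order.strict_implies_not_eq[OF assms, symmetric]] fact_Suc of_nat_Suc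
    using alg_rel[where A="pochhammer a n" and B="pochhammer (b+1) n" and C="pochhammer c n" and N="fact n"
      and b=b and c=c and p="c + real n" and q="1 + real n" and r="a + real n"] p cn assms
    by (simp add: mult_ac add_ac)
qed

lemma hyp_rel:
  assumes "c > 0" "\<bar>z\<bar> < 1"
  shows "hyp2F1 a b c z = (1 - z) * hyp2F1 a (b+1) c z + ((c - a) * z / c) * hyp2F1 a (b+1) (c+1) z"
proof -
  define F1 where "F1 = hyp2F1 a (b+1) c z"
  define F2 where "F2 = hyp2F1 a (b+1) (c+1) z"
  have s1: "(\<lambda>n. cf a (b+1) c n * z ^ n) sums F1"
    unfolding F1_def hyp_cf using cf_summable[OF assms(2)] by (rule summable_sums)
  have s2: "(\<lambda>n. cf a (b+1) (c+1) n * z ^ n) sums F2"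
    unfolding F2_def hyp_cf using cf_summable[OF assms(2)] by (rule summable_sums)
  have A: "(\<lambda>n. cf a (b+1) c (Suc n) * z ^ Suc n) sums (F1 - 1)"
    using s1 by (subst sums_Suc_iff) (simp add: cf_def)
  have B: "(\<lambda>n. z * (cf a (b+1) c n * z ^ n)) sums (z * F1)"
    using s1 by (rule sums_mult)
  have C: "(\<lambda>n. ((c - a) * z / c) * (cf a (b+1) (c+1) n * z ^ n)) sums (((c - a) * z / c) * F2)"
    using s2 by (rule sums_mult)
  have D: "(\<lambda>n. cf a (b+1) c (Suc n) * z ^ Suc n - z * (cf a (b+1) c n * z ^ n) + ((c - a) * z / c) * (cf a (b+1) (c+1) n * z ^ n)) sums (F1 - 1 - z * F1 + ((c - a) * z / c) * F2)"
    by (intro sums_add sums_diff A B C)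
  have "(\<lambda>n. cf a b c (Suc n) * z ^ Suc n) sums (F1 - 1 - z * F1 + ((c - a) * z / c) * F2)"
  proof (rule sums_cong[THEN iffD1, OF _ D])
    fix n
    show "cf a (b+1) c (Suc n) * z ^ Suc n - z * (cf a (b+1) c n * z ^ n) + ((c - a) * z / c) * (cf a (b+1) (c+1) n * z ^ n) = cf a b c (Suc n) * z ^ Suc n"
      unfolding cf_rel[OF assms(1), of a b n] by (simp add: algebra_simps)
  qed
  then have "(\<lambda>n. cf a b c n * z ^ n) sums (F1 - 1 - z * F1 + ((c - a) * z / c) * F2 + 1)"
    by (subst (asm) sums_Suc_iff) (simp add: cf_def)
  then have "hyp2F1 a b c z = F1 - 1 - z * F1 + ((c - a) * z / c) * F2 + 1"
    unfolding hyp_cf by (rule sums_unique[symmetric])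
  then show ?thesis unfolding F1_def[symmetric] F2_def[symmetric] by (simp add: algebra_simps)
qed

lemma hyp_sym: "hyp2F1 a b c z = hyp2F1 b a c z"
  by (simp add: hyp2F1_def mult.commute)

lemma step:
  assumes "c \<ge> 1" "a < c" "b < 0" "0 \<le> z" "z < 1"
    and "hyp2F1 a (b+1) c z > 0" "hyp2F1 a (b+1) (c+1) z > 0"
  shows "hyp2F1 a b c z > 0"
proof -
  have "(1 - z) * hyp2F1 a (b+1) c z > 0" using assms by simp
  moreover have "((c - a) * z / c) * hyp2F1 a (b+1) (c+1) z \<ge> 0"
    using assms by (intro mult_nonneg_nonneg divide_nonneg_pos) auto
  moreover have "hyp2F1 a b c z = (1 - z) * hyp2F1 a (b+1) c z + ((c - a) * z / c) * hyp2F1 a (b+1) (c+1) z"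
    using assms by (intro hyp_rel) auto
  ultimately show ?thesis by linarith
qed

lemma ceil_step: "(b::real) < 0 \<Longrightarrow> nat \<lceil>-(b+1)\<rceil> < nat \<lceil>-b\<rceil>"
proof -
  assume b: "b < 0"
  have "-(b+1) = -b - 1" by simp
  then have "\<lceil>-(b+1)\<rceil> = \<lceil>-b\<rceil> - 1" by simp
  moreover have "\<lceil>-b\<rceil> > 0" using b by simp
  ultimately show ?thesis by simp
qed

lemma pos_ind:
  "\<forall>a b c. nat \<lceil>-a\<rceil> + nat \<lceil>-b\<rceil> = n \<longrightarrow> c \<ge> 1 \<longrightarrow> a < c \<longrightarrow> b < c \<longrightarrow> 0 \<le> z \<longrightarrow> z < 1 \<longrightarrow> hyp2F1 a b c z > 0"
proof (induction n rule: less_induct)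
  case (less n)
  show ?case
  proof (intro allI impI)
    fix a b c :: real
    assume n: "nat \<lceil>-a\<rceil> + nat \<lceil>-b\<rceil> = n" and c: "c \<ge> 1" "a < c" "b < c" and z: "0 \<le> z" "z < 1"
    show "hyp2F1 a b c z > 0"
    proof (cases "b < 0")
      case True
      have m: "nat \<lceil>-a\<rceil> + nat \<lceil>-(b+1)\<rceil> < n" using ceil_step[OF True] n by linarith
      show ?thesis
      proof (rule step[OF c(1,2) True z])
        show "hyp2F1 a (b+1) c z > 0" using less.IH[OF m] c z True by auto
        show "hyp2F1 a (b+1) (c+1) z > 0" using less.IH[OF m] c z True by auto
      qed
    next
      case False
      show ?thesis
      proof (cases "a < 0")
        case True
        have m: "nat \<lceil>-b\<rceil> + nat \<lceil>-(a+1)\<rceil> < n" using ceil_step[OF True] n by linarith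
        have "hyp2F1 b a c z > 0"
        proof (rule step[OF c(1,3) True z])
          show "hyp2F1 b (a+1) c z > 0" using less.IH[OF m] c z True by auto
          show "hyp2F1 b (a+1) (c+1) z > 0" using less.IH[OF m] c z True by auto
        qed
        then show ?thesis by (simp add: hyp_sym)
      next
        case False2: False
        show ?thesis using pos_base[of a b c z] False False2 c z by simp
      qed
    qed
  qed
qed

lemma pos_gen:
  assumes "c \<ge> 1" "a < c" "b < c" "0 \<le> z" "z < 1"
  shows "hyp2F1 a b c z > 0"
  using pos_ind[of "nat \<lceil>-a\<rceil> + nat \<lceil>-b\<rceil>" z] assms by blast

lemma alg2:
  fixes q a b g A B G N :: real
  assumes "q \<noteq> 0" "g \<noteq> 0" "G \<noteq> 0" "N \<noteq> 0"
  shows "q * (a * A * (b * B) / (g * G * (q * N))) = a * b / g * (A * B / (G * N))"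
  using assms by (simp add: field_simps)

lemma diffs_cf:
  assumes "g > 0"
  shows "diffs (cf a b g) n = (a * b / g) * cf (a+1) (b+1) (g+1) n"
proof -
  have p: "pochhammer (g+1) n > 0" using assms by (intro pochhammer_pos) simp
  show ?thesis
    unfolding diffs_def cf_def pochhammer_rec[of a n] pochhammer_rec[of b n] pochhammer_rec[of g n] fact_Suc
    using p assms by (intro alg2) auto
qed

theorem corollary4p6:
  fixes \<alpha> \<beta> \<gamma> :: real
  assumes "\<gamma> > 0" and "\<alpha> * \<beta> > 0"
  shows "strict_mono_on {0..<1} (\<lambda>z. hyp2F1 \<alpha> \<beta> \<gamma> z - 1)"
proof (rule strict_mono_onI)
  fix x y :: real
  assume x: "x \<in> {0..<1}" and y: "y \<in> {0..<1}" and xy: "x < y"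
  have fpos: "hyp2F1 (\<alpha>+1) (\<beta>+1) (\<gamma>+1) t > 0" if t: "0 \<le> t" "t < 1" for t
  proof (cases "\<alpha> > 0")
    case True
    then have "\<beta> > 0" using assms(2) by (simp add: zero_less_mult_iff)
    then show ?thesis using True assms t by (intro pos_base) auto
  next
    case False
    then have "\<alpha> < 0" "\<beta> < 0" using assms(2) by (auto simp: zero_less_mult_iff)
    then show ?thesis using assms t by (intro pos_gen) auto
  qed
  show "hyp2F1 \<alpha> \<beta> \<gamma> x - 1 < hyp2F1 \<alpha> \<beta> \<gamma> y - 1"
  proof (rule DERIV_pos_imp_increasing[OF xy])
    fix t assume t: "x \<le> t" "t \<le> y"
    then have t0: "0 \<le> t" "t < 1" using x y by auto
    have D: "((\<lambda>z. \<Sum>n. cf \<alpha> \<beta> \<gamma> n * z ^ n) has_field_derivative (\<Sum>n. diffs (cf \<alpha> \<beta> \<gamma>) n * t ^ n)) (at t)"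
      by (rule termdiffs_strong'[where K=1]) (use cf_summable t0 in auto)
    have "(\<Sum>n. diffs (cf \<alpha> \<beta> \<gamma>) n * t ^ n) = (\<Sum>n. (\<alpha> * \<beta> / \<gamma>) * (cf (\<alpha>+1) (\<beta>+1) (\<gamma>+1) n * t ^ n))"
      unfolding diffs_cf[OF assms(1)] by (simp add: mult.assoc)
    also have "\<dots> = (\<alpha> * \<beta> / \<gamma>) * hyp2F1 (\<alpha>+1) (\<beta>+1) (\<gamma>+1) t"
      unfolding hyp_cf by (rule suminf_mult) (use cf_summable t0 in auto)
    finally have eq: "(\<Sum>n. diffs (cf \<alpha> \<beta> \<gamma>) n * t ^ n) = (\<alpha> * \<beta> / \<gamma>) * hyp2F1 (\<alpha>+1) (\<beta>+1) (\<gamma>+1) t" .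
    have D2: "((\<lambda>z. hyp2F1 \<alpha> \<beta> \<gamma> z - 1) has_field_derivative ((\<alpha> * \<beta> / \<gamma>) * hyp2F1 (\<alpha>+1) (\<beta>+1) (\<gamma>+1) t - 0)) (at t)"
    proof -
      have fe: "(\<lambda>z. hyp2F1 \<alpha> \<beta> \<gamma> z) = (\<lambda>z. \<Sum>n. cf \<alpha> \<beta> \<gamma> n * z ^ n)"
        by (simp add: hyp_cf)
      have "((\<lambda>z. hyp2F1 \<alpha> \<beta> \<gamma> z) has_field_derivative ((\<alpha> * \<beta> / \<gamma>) * hyp2F1 (\<alpha>+1) (\<beta>+1) (\<gamma>+1) t)) (at t)"
        unfolding fe using D[unfolded eq] .
      then show ?thesis by (intro derivative_intros)
    qed
    have "(\<alpha> * \<beta> / \<gamma>) * hyp2F1 (\<alpha>+1) (\<beta>+1) (\<gamma>+1) t - 0 > 0"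
      using fpos[OF t0] assms by simp
    with D2 show "\<exists>d. ((\<lambda>z. hyp2F1 \<alpha> \<beta> \<gamma> z - 1) has_real_derivative d) (at t) \<and> d > 0" by blast
  qed
qed

end
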